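(* The $1$-matching complex $M_1(G)$ of any finite fully whiskered graph $G$ is vertex decomposable.
   Context: A fully whiskered graph is a finite simple graph in which every vertex that is not a leaf (degree $\neq 1$) is adjacent to at least one leaf vertex. The $1$-matching complex $M_1(G)$ is the simplicial complex whose simplices are the sets $\sigma\subseteq E(G)$ of pairwise non-adjacent edges (matchings), i.e. every vertex of $G$ is incident to at most one edge of $\sigma$. For a simplicial complex $K$ and a vertex $v$, $\mathrm{lk}(v,K)=\{\tau\in K: v\notin\tau,\ \tau\cup\{v\}\in K\}$ and $\mathrm{del}(v,K)=\{\tau\in K: v\notin\tau\}$. A simplicial complex $K$ is vertex decomposable if $K$ is a simplex (the set of all subsets of a finite set, including $\{\emptyset\}$), or $K$ contains a vertex $v$ such that (i) both $\mathrm{lk}(v,K)$ and $\mathrm{del}(v,K)$ are vertex decomposable, and (ii) every facet (maximal simplex) of $\mathrm{del}(v,K)$ is a facet of $K$. *)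

theory Defs
  imports Main
begin

definition simple_graph :: "'v set \<Rightarrow> 'v set set \<Rightarrow> bool" where
  "simple_graph V E \<longleftrightarrow> finite V \<and> (\<forall>e\<in>E. e \<subseteq> V \<and> card e = 2)"

definition degree :: "'v set set \<Rightarrow> 'v \<Rightarrow> nat" where
  "degree E v = card {e\<in>E. v \<in> e}"

definition is_leaf :: "'v set set \<Rightarrow> 'v \<Rightarrow> bool" where
  "is_leaf E v \<longleftrightarrow> degree E v = 1"

definition adjacent :: "'v set set \<Rightarrow> 'v \<Rightarrow> 'v \<Rightarrow> bool" where
  "adjacent E u v \<longleftrightarrow> {u, v} \<in> E"

definition fully_whiskered :: "'v set \<Rightarrow> 'v set set \<Rightarrow> bool" where
  "fully_whiskered V E \<longleftrightarrow> simple_graph V E \<and>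
     (\<forall>v\<in>V. \<not> is_leaf E v \<longrightarrow> (\<exists>u\<in>V. adjacent E v u \<and> is_leaf E u))"

definition matching_complex :: "'v set \<Rightarrow> 'v set set \<Rightarrow> 'v set set set" where
  "matching_complex V E = {\<sigma>. \<sigma> \<subseteq> E \<and> (\<forall>v\<in>V. card {e\<in>\<sigma>. v \<in> e} \<le> 1)}"

text \<open>Simplicial complexes are represented as sets of faces.\<close>
definition link :: "'a \<Rightarrow> 'a set set \<Rightarrow> 'a set set" where
  "link v K = {\<tau>\<in>K. v \<notin> \<tau> \<and> insert v \<tau> \<in> K}"

definition deletion :: "'a \<Rightarrow> 'a set set \<Rightarrow> 'a set set" where
  "deletion v K = {\<tau>\<in>K. v \<notin> \<tau>}"

definition facet :: "'a set set \<Rightarrow> 'a set \<Rightarrow> bool" where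
  "facet K F \<longleftrightarrow> F \<in> K \<and> (\<forall>G\<in>K. F \<subseteq> G \<longrightarrow> G = F)"

definition is_simplex :: "'a set set \<Rightarrow> bool" where
  "is_simplex K \<longleftrightarrow> (\<exists>S. finite S \<and> K = Pow S)"

inductive vertex_decomposable :: "'a set set \<Rightarrow> bool" where
  simplex: "is_simplex K \<Longrightarrow> vertex_decomposable K"
| shedding: "{v} \<in> K \<Longrightarrow> vertex_decomposable (link v K) \<Longrightarrow>
     vertex_decomposable (deletion v K) \<Longrightarrow>
     (\<forall>F. facet (deletion v K) F \<longrightarrow> facet K F) \<Longrightarrow> vertex_decomposable K"

end

theory Submission
  imports Defs
begin

definition mc :: "'v set set \<Rightarrow> 'v set set set" where
  "mc E = {\<sigma>. \<sigma> \<subseteq> E \<and> (\<forall>f\<in>\<sigma>. \<forall>f'\<in>\<sigma>. f \<noteq> f' \<longrightarrow> f \<inter> f' = {})}"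

lemma mcD1: "\<sigma> \<in> mc E \<Longrightarrow> \<sigma> \<subseteq> E"
  unfolding mc_def by (drule CollectD) (erule conjunct1)
lemma mcD2: "\<sigma> \<in> mc E \<Longrightarrow> \<forall>f\<in>\<sigma>. \<forall>f'\<in>\<sigma>. f \<noteq> f' \<longrightarrow> f \<inter> f' = {}"
  unfolding mc_def by (drule CollectD) (erule conjunct2)

definition leafedge :: "'v set set \<Rightarrow> 'v \<Rightarrow> 'v set \<Rightarrow> bool" where
  "leafedge E w g \<longleftrightarrow> g \<in> E \<and> w \<in> g \<and> (\<exists>u\<in>g. u \<noteq> w \<and> (\<forall>h\<in>E. u \<in> h \<longrightarrow> h = g))"

definition good :: "'v set set \<Rightarrow> bool" where
  "good E \<longleftrightarrow> finite E \<and> (\<forall>e\<in>E. card e = 2) \<and>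
     (\<forall>w. (\<exists>e1 e2. e1 \<in> E \<and> e2 \<in> E \<and> e1 \<noteq> e2 \<and> w \<in> e1 \<and> w \<in> e2) \<longrightarrow> (\<exists>g. leafedge E w g))"

lemma card2_third:
  assumes "card g = 2" "a \<in> g" "b \<in> g" "c \<in> g" "a \<noteq> b"
  shows "c = a \<or> c = b"
  using assms by (auto simp: card_2_iff)

lemma good_del:
  assumes gd: "good E" and eE: "e \<in> E" and ve: "v \<in> e" and lg: "leafedge E v g" and ge: "g \<noteq> e"
  shows "good (E - {e})"
  unfolding good_def
proof (intro conjI allI impI)
  show "finite (E - {e})" using gd by (simp add: good_def)
  show "\<forall>e'\<in>E - {e}. card e' = 2" using gd by (simp add: good_def)
  fix w assume "\<exists>e1 e2. e1 \<in> E - {e} \<and> e2 \<in> E - {e} \<and> e1 \<noteq> e2 \<and> w \<in> e1 \<and> w \<in> e2"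
  then obtain e1 e2 where h: "e1 \<in> E" "e2 \<in> E" "e1 \<noteq> e2" "w \<in> e1" "w \<in> e2" "e1 \<noteq> e" "e2 \<noteq> e" by blast
  then obtain g' where lg': "leafedge E w g'" using gd unfolding good_def by blast
  show "\<exists>g. leafedge (E - {e}) w g"
  proof (cases "g' = e")
    case False
    then show ?thesis using lg' unfolding leafedge_def by (intro exI[of _ g']) blast
  next
    case True
    then obtain u where u: "u \<in> e" "u \<noteq> w" "\<forall>h\<in>E. u \<in> h \<longrightarrow> h = e" and we: "w \<in> e"
      using lg' unfolding leafedge_def by blast
    have c2: "card e = 2" using gd eE by (simp add: good_def)
    have "v = w \<or> v = u" using card2_third[OF c2 we u(1) ve] u(2) by auto
    moreover have "v \<noteq> u" using u(3) lg ge unfolding leafedge_def by blast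
    ultimately have "v = w" by blast
    then show ?thesis using lg ge unfolding leafedge_def by (intro exI[of _ g]) blast
  qed
qed

lemma good_link:
  assumes gd: "good E" and eE: "e \<in> E"
  shows "good {f\<in>E. f \<inter> e = {}}"
  unfolding good_def
proof (intro conjI allI impI)
  show "finite {f\<in>E. f \<inter> e = {}}" using gd by (simp add: good_def)
  show "\<forall>e'\<in>{f\<in>E. f \<inter> e = {}}. card e' = 2" using gd by (simp add: good_def)
  fix w assume "\<exists>e1 e2. e1 \<in> {f\<in>E. f \<inter> e = {}} \<and> e2 \<in> {f\<in>E. f \<inter> e = {}} \<and> e1 \<noteq> e2 \<and> w \<in> e1 \<and> w \<in> e2"
  then obtain e1 e2 where h: "e1 \<in> E" "e2 \<in> E" "e1 \<noteq> e2" "w \<in> e1" "w \<in> e2" "e1 \<inter> e = {}" by blast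
  then have wn: "w \<notin> e" by blast
  obtain g' where lg': "leafedge E w g'" using gd h unfolding good_def by blast
  then obtain u where g'E: "g' \<in> E" and wg: "w \<in> g'" and u: "u \<in> g'" "u \<noteq> w" "\<forall>h\<in>E. u \<in> h \<longrightarrow> h = g'"
    unfolding leafedge_def by blast
  have c2: "card g' = 2" using gd g'E by (simp add: good_def)
  have dis: "g' \<inter> e = {}"
  proof (rule ccontr)
    assume "g' \<inter> e \<noteq> {}"
    then obtain y where y: "y \<in> g'" "y \<in> e" by blast
    have "y = w \<or> y = u" using card2_third[OF c2 wg u(1) y(1)] u(2) by auto
    then show False
    proof
      assume "y = w" then show False using wn y by blast
    next
      assume "y = u" then have "e = g'" using u(3) eE y by blast
      then show False using wn wg by blast
    qed
  qed
  show "\<exists>g. leafedge {f\<in>E. f \<inter> e = {}} w g"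
    using g'E wg u dis unfolding leafedge_def by (intro exI[of _ g']) blast
qed

lemma link_mc:
  assumes gd: "good E" and eE: "e \<in> E"
  shows "link e (mc E) = mc {f\<in>E. f \<inter> e = {}}"
proof -
  have "card e = 2" using gd eE by (simp add: good_def)
  then have ne: "e \<noteq> {}" by auto
  show ?thesis
  proof
    show "link e (mc E) \<subseteq> mc {f\<in>E. f \<inter> e = {}}"
    proof
      fix \<tau> assume t: "\<tau> \<in> link e (mc E)"
      then have et: "e \<notin> \<tau>" and ins: "insert e \<tau> \<in> mc E" unfolding link_def by simp_all
      have sE: "\<tau> \<subseteq> E" and p: "\<forall>f\<in>insert e \<tau>. \<forall>f'\<in>insert e \<tau>. f \<noteq> f' \<longrightarrow> f \<inter> f' = {}"
        using mcD1[OF ins] mcD2[OF ins] by blast+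
      have "\<forall>f\<in>\<tau>. f \<inter> e = {}"
      proof
        fix f assume ft: "f \<in> \<tau>"
        then have "f \<noteq> e" using et by metis
        then show "f \<inter> e = {}" using p[rule_format, of f e] ft by simp
      qed
      then have "\<tau> \<subseteq> {f\<in>E. f \<inter> e = {}}" using sE by blast
      moreover have "\<forall>f\<in>\<tau>. \<forall>f'\<in>\<tau>. f \<noteq> f' \<longrightarrow> f \<inter> f' = {}" using p by blast
      ultimately show "\<tau> \<in> mc {f\<in>E. f \<inter> e = {}}" unfolding mc_def by simp
    qed
    show "mc {f\<in>E. f \<inter> e = {}} \<subseteq> link e (mc E)"
    proof
      fix \<tau> assume t: "\<tau> \<in> mc {f\<in>E. f \<inter> e = {}}"
      have sE: "\<tau> \<subseteq> {f\<in>E. f \<inter> e = {}}" by (rule mcD1[OF t])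
      have p: "\<forall>f\<in>\<tau>. \<forall>f'\<in>\<tau>. f \<noteq> f' \<longrightarrow> f \<inter> f' = {}" by (rule mcD2[OF t])
      have et: "e \<notin> \<tau>"
      proof
        assume "e \<in> \<tau>"
        then have "e \<inter> e = {}" using sE by auto
        then show False using ne by simp
      qed
      have tm: "\<tau> \<in> mc E" using sE p unfolding mc_def by blast
      have "insert e \<tau> \<subseteq> E" using sE eE by blast
      moreover have "\<forall>f\<in>insert e \<tau>. \<forall>f'\<in>insert e \<tau>. f \<noteq> f' \<longrightarrow> f \<inter> f' = {}"
        using p sE by blast
      ultimately have "insert e \<tau> \<in> mc E" unfolding mc_def by simp
      then show "\<tau> \<in> link e (mc E)" using tm et unfolding link_def by simp
    qed
  qed
qed

lemma del_mc: "deletion e (mc E) = mc (E - {e})"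
  unfolding deletion_def mc_def by blast

lemma facet_cond:
  assumes gd: "good E" and eE: "e \<in> E" and ve: "v \<in> e" and lg: "leafedge E v g" and ge: "g \<noteq> e"
    and F: "facet (deletion e (mc E)) F"
  shows "facet (mc E) F"
  unfolding facet_def
proof (intro conjI ballI impI)
  have Fmax: "\<forall>G\<in>deletion e (mc E). F \<subseteq> G \<longrightarrow> G = F" and Fin: "F \<in> deletion e (mc E)"
    using F unfolding facet_def by simp_all
  show FK: "F \<in> mc E" using Fin unfolding deletion_def by simp
  fix G assume GK: "G \<in> mc E" and FG: "F \<subseteq> G"
  show "G = F"
  proof (cases "e \<in> G")
    case False
    then have "G \<in> deletion e (mc E)" using GK unfolding deletion_def by simp
    then show ?thesis using Fmax FG by blast
  next
    case True
    have eF: "e \<notin> F" using Fin unfolding deletion_def by simp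
    have Fv: "\<forall>f\<in>F. v \<notin> f"
    proof
      fix f assume fF: "f \<in> F"
      then have "f \<noteq> e" using eF by blast
      then have "f \<inter> e = {}" using GK True fF FG unfolding mc_def by blast
      then show "v \<notin> f" using ve by blast
    qed
    obtain u where gE: "g \<in> E" and vg: "v \<in> g" and u: "u \<in> g" "u \<noteq> v" "\<forall>h\<in>E. u \<in> h \<longrightarrow> h = g"
      using lg unfolding leafedge_def by blast
    have c2: "card g = 2" using gd gE by (simp add: good_def)
    have gF: "g \<notin> F" using Fv vg by blast
    have FE: "F \<subseteq> E" using FK unfolding mc_def by blast
    have disj: "\<forall>f\<in>F. f \<inter> g = {}"
    proof (intro ballI)
      fix f assume fF: "f \<in> F"
      show "f \<inter> g = {}"
      proof (rule ccontr)
        assume "f \<inter> g \<noteq> {}"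
        then obtain y where y: "y \<in> f" "y \<in> g" by blast
        have "y = v \<or> y = u" using card2_third[OF c2 vg u(1) y(2)] u(2) by auto
        then show False
        proof
          assume "y = v" then show False using Fv fF y by blast
        next
          assume "y = u" then have "f = g" using u(3) fF FE y by blast
          then show False using gF fF by blast
        qed
      qed
    qed
    have "insert g F \<in> mc E"
    proof -
      have "insert g F \<subseteq> E" using FE gE by simp
      moreover have "\<forall>f\<in>insert g F. \<forall>f'\<in>insert g F. f \<noteq> f' \<longrightarrow> f \<inter> f' = {}"
        using FK disj unfolding mc_def by blast
      ultimately show ?thesis unfolding mc_def by simp
    qed
    then have "insert g F \<in> deletion e (mc E)" using ge eF unfolding deletion_def by simp
    then have "insert g F = F" using Fmax by blast
    then show ?thesis using gF by blast
  qed
qed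

lemma main: "good E \<Longrightarrow> vertex_decomposable (mc E)"
proof (induction "card E" arbitrary: E rule: less_induct)
  case less
  have fin: "finite E" using less.prems by (simp add: good_def)
  show ?case
  proof (cases "\<exists>v e1 e2. e1 \<in> E \<and> e2 \<in> E \<and> e1 \<noteq> e2 \<and> v \<in> e1 \<and> v \<in> e2")
    case False
    have "mc E = Pow E" unfolding mc_def using False by blast
    then have "is_simplex (mc E)" unfolding is_simplex_def using fin by blast
    then show ?thesis by (rule vertex_decomposable.simplex)
  next
    case True
    then obtain v e1 e2 where h: "e1 \<in> E" "e2 \<in> E" "e1 \<noteq> e2" "v \<in> e1" "v \<in> e2" by blast
    obtain g where lg: "leafedge E v g" using less.prems h unfolding good_def by blast
    obtain e where e: "e \<in> E" "v \<in> e" "e \<noteq> g" using h by blast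
    have ge: "g \<noteq> e" using e by blast
    show ?thesis
    proof (rule vertex_decomposable.shedding[where v = e])
      show "{e} \<in> mc E" using e unfolding mc_def by blast
      have "card {f\<in>E. f \<inter> e = {}} < card E"
      proof (rule psubset_card_mono[OF fin])
        have "card e = 2" using less.prems e by (simp add: good_def)
        then have "e \<noteq> {}" by auto
        then show "{f\<in>E. f \<inter> e = {}} \<subset> E" using e by blast
      qed
      then show "vertex_decomposable (link e (mc E))"
        using less.hyps good_link[OF less.prems e(1)] link_mc[OF less.prems e(1)] by simp
      have "card (E - {e}) < card E" by (rule card_Diff1_less[OF fin e(1)])
      then show "vertex_decomposable (deletion e (mc E))"
        using less.hyps good_del[OF less.prems e(1) e(2) lg ge] del_mc by metis
      show "\<forall>F. facet (deletion e (mc E)) F \<longrightarrow> facet (mc E) F"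
        using facet_cond[OF less.prems e(1) e(2) lg ge] by blast
    qed
  qed
qed

lemma fw_good:
  assumes fw: "fully_whiskered V E"
  shows "good E" and "matching_complex V E = mc E"
proof -
  have sg: "finite V" "\<forall>e\<in>E. e \<subseteq> V \<and> card e = 2" using fw unfolding fully_whiskered_def simple_graph_def by blast+
  have finE: "finite E" using sg by (meson PowI finite_Pow_iff rev_finite_subset subsetI)
  show "good E" unfolding good_def
  proof (intro conjI allI impI)
    show "finite E" by fact
    show "\<forall>e\<in>E. card e = 2" using sg by blast
    fix w assume "\<exists>e1 e2. e1 \<in> E \<and> e2 \<in> E \<and> e1 \<noteq> e2 \<and> w \<in> e1 \<and> w \<in> e2"
    then obtain e1 e2 where h: "e1 \<in> E" "e2 \<in> E" "e1 \<noteq> e2" "w \<in> e1" "w \<in> e2" by blast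
    have wV: "w \<in> V" using sg h by blast
    have "{e1, e2} \<subseteq> {e\<in>E. w \<in> e}" using h by blast
    then have "card {e1,e2} \<le> degree E w" unfolding degree_def
      by (intro card_mono) (use finE in auto)
    then have "degree E w \<ge> 2" using h(3) by simp
    then have "\<not> is_leaf E w" unfolding is_leaf_def by simp
    moreover have fw2: "\<forall>v\<in>V. \<not> is_leaf E v \<longrightarrow> (\<exists>u\<in>V. adjacent E v u \<and> is_leaf E u)"
      using fw unfolding fully_whiskered_def by (rule conjunct2)
    ultimately have "\<exists>u\<in>V. adjacent E w u \<and> is_leaf E u" using wV by blast
    then obtain u where uV: "u \<in> V" and adj: "{w, u} \<in> E" and lu: "degree E u = 1"
      unfolding adjacent_def is_leaf_def by blast
    obtain g where gs: "{e\<in>E. u \<in> e} = {g}" using lu unfolding degree_def by (rule card_1_singletonE)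
    have "{w,u} \<in> {e\<in>E. u \<in> e}" using adj by simp
    then have "{w,u} \<in> {g}" by (simp only: gs)
    then have "g = {w,u}" by simp
    have c2: "card {w,u} = 2" using sg adj by blast
    then have "u \<noteq> w" by (cases "u = w") auto
    show "\<exists>g. leafedge E w g" unfolding leafedge_def
      using adj gs \<open>g = {w,u}\<close> \<open>u \<noteq> w\<close> by (intro exI[of _ "{w,u}"]) blast
  qed
  show "matching_complex V E = mc E"
  proof
    show "matching_complex V E \<subseteq> mc E"
    proof
      fix \<sigma> assume s: "\<sigma> \<in> matching_complex V E"
      then have sE: "\<sigma> \<subseteq> E" and c: "\<forall>v\<in>V. card {e\<in>\<sigma>. v \<in> e} \<le> 1" unfolding matching_complex_def by simp_all
      have fs: "finite \<sigma>" using sE finE finite_subset by blast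
      have "\<forall>f\<in>\<sigma>. \<forall>f'\<in>\<sigma>. f \<noteq> f' \<longrightarrow> f \<inter> f' = {}"
      proof (intro ballI impI)
        fix f f' assume ff: "f \<in> \<sigma>" "f' \<in> \<sigma>" "f \<noteq> f'"
        show "f \<inter> f' = {}"
        proof (rule ccontr)
          assume "f \<inter> f' \<noteq> {}"
          then obtain y where y: "y \<in> f" "y \<in> f'" by blast
          have yV: "y \<in> V" using sg sE ff y by blast
          have "card {e\<in>\<sigma>. y \<in> e} \<le> Suc 0" using c yV by simp
          then have "\<forall>a\<in>{e\<in>\<sigma>. y \<in> e}. \<forall>b\<in>{e\<in>\<sigma>. y \<in> e}. a = b"
            using card_le_Suc0_iff_eq[of "{e\<in>\<sigma>. y \<in> e}"] fs by simp
          then show False using ff y by blast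
        qed
      qed
      then show "\<sigma> \<in> mc E" using sE unfolding mc_def by blast
    qed
    show "mc E \<subseteq> matching_complex V E"
    proof
      fix \<sigma> assume s: "\<sigma> \<in> mc E"
      have sE: "\<sigma> \<subseteq> E" by (rule mcD1[OF s])
      have p: "\<forall>f\<in>\<sigma>. \<forall>f'\<in>\<sigma>. f \<noteq> f' \<longrightarrow> f \<inter> f' = {}" by (rule mcD2[OF s])
      have fs: "finite \<sigma>" using sE finE finite_subset by blast
      have "\<forall>v\<in>V. card {e\<in>\<sigma>. v \<in> e} \<le> 1"
      proof
        fix v assume "v \<in> V"
        have "\<forall>a\<in>{e\<in>\<sigma>. v \<in> e}. \<forall>b\<in>{e\<in>\<sigma>. v \<in> e}. a = b" using p by blast
        then have "card {e\<in>\<sigma>. v \<in> e} \<le> Suc 0"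
          using card_le_Suc0_iff_eq[of "{e\<in>\<sigma>. v \<in> e}"] fs by simp
        then show "card {e\<in>\<sigma>. v \<in> e} \<le> 1" by simp
      qed
      then show "\<sigma> \<in> matching_complex V E" using sE unfolding matching_complex_def by blast
    qed
  qed
qed

theorem corollary3p3:
  fixes V :: "'v set" and E :: "'v set set"
  assumes "fully_whiskered V E"
  shows "vertex_decomposable (matching_complex V E)"
  using main[OF fw_good(1)[OF assms]] fw_good(2)[OF assms] by simp

end
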